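(* Let $G=(V,E)$ be a directed graph, $T=\{t_1,\dots,t_{n_T}\}$ a finite task set, $W^j=\{w^j_{uv}\in[0,1]:(u,v)\in E\}$ for each $t_j$, $\mathcal{L}:V\to\{a_1,\dots,a_{n_A}\}$ a location map, and $q_j^k\ge0$ qualities with $Q_j:=\sum_{v\in V}q_j^{\mathcal{L}(v)}>0$ for every $j$. Let $V_R\subseteq V$ with task sets $T_i\subseteq T$ for $v_i\in V_R$, and let $S\subseteq V_R$. Let $R(X)$ be a random MT-RR set as defined in the context. Then $$f(S)=\sum_{t_j\in T}Q_j\cdot\mathbb{E}_{R(X)}\big[\mathbb{I}_j(S^j\cap R(X))\big],$$ where $\mathbb{I}_j(S^j\cap R(X))=1$ if $X=j$ and $S^j\cap R(X)\neq\emptyset$, and $0$ otherwise.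
   Context: A realization $g$ of $W^j$ is a random spanning subgraph of $G$ in which each edge $(u,v)$ is included independently with probability $w^j_{uv}$, with probability $\Pr[g;W^j]$. $I_g(A)$ denotes the set of nodes reachable from a node of $A$ by a directed path in $g$ (including $A$). $S^j=\{v_i\in S:t_j\in T_i\}$, and $f(S)=\frac{1}{n_T}\sum_{t_j\in T}\sum_g\Pr[g;W^j]\sum_{v\in I_g(S^j)}q_j^{\mathcal{L}(v)}$. A random RR set $R^j$ for task $t_j$ is generated by: choosing a node $u\in V$ with probability $q_j^{\mathcal{L}(u)}/Q_j$; independently sampling a realization $g$ of $W^j$; and letting $R^j$ be the set of nodes that can reach $u$ by a directed path in $g$ (including $u$). A random MT-RR set $R(X)$ is generated by choosing $X$ uniformly at random from $\{1,\dots,n_T\}$ and then generating a random RR set for task $t_X$. *)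

theory Defs
  imports "HOL-Probability.Probability"
begin

text \<open>Tasks are indexed by j in {1..nT}. Edge probabilities of task j: w j u v.
  Location map L, qualities q j k.\<close>

definition Qsum :: "'v set \<Rightarrow> ('v \<Rightarrow> 'a) \<Rightarrow> (nat \<Rightarrow> 'a \<Rightarrow> real) \<Rightarrow> nat \<Rightarrow> real" where
  "Qsum V L q j = (\<Sum>v\<in>V. q j (L v))"

definition realization_prob ::
  "('v \<times> 'v) set \<Rightarrow> (nat \<Rightarrow> 'v \<Rightarrow> 'v \<Rightarrow> real) \<Rightarrow> nat \<Rightarrow> ('v \<times> 'v) set \<Rightarrow> real" where
  "realization_prob E w j g =
     (if g \<subseteq> E then (\<Prod>(u,v)\<in>g. w j u v) * (\<Prod>(u,v)\<in>E - g. 1 - w j u v) else 0)"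

definition reach_from :: "('v \<times> 'v) set \<Rightarrow> 'v set \<Rightarrow> 'v set" where
  "reach_from g A = {v. \<exists>a\<in>A. (a, v) \<in> g\<^sup>*}"

definition task_seeds :: "'v set \<Rightarrow> ('v \<Rightarrow> nat set) \<Rightarrow> nat \<Rightarrow> 'v set" where
  "task_seeds S Ts j = {v\<in>S. j \<in> Ts v}"

definition f_obj ::
  "'v set \<Rightarrow> ('v \<times> 'v) set \<Rightarrow> nat \<Rightarrow> (nat \<Rightarrow> 'v \<Rightarrow> 'v \<Rightarrow> real) \<Rightarrow> ('v \<Rightarrow> 'a)
   \<Rightarrow> (nat \<Rightarrow> 'a \<Rightarrow> real) \<Rightarrow> ('v \<Rightarrow> nat set) \<Rightarrow> 'v set \<Rightarrow> real" where
  "f_obj V E nT w L q Ts S =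
     (1 / real nT) * (\<Sum>j\<in>{1..nT}. \<Sum>g\<in>Pow E.
        realization_prob E w j g * (\<Sum>v\<in>reach_from g (task_seeds S Ts j). q j (L v)))"

definition realization_pmf ::
  "('v \<times> 'v) set \<Rightarrow> (nat \<Rightarrow> 'v \<Rightarrow> 'v \<Rightarrow> real) \<Rightarrow> nat \<Rightarrow> ('v \<times> 'v) set pmf" where
  "realization_pmf E w j = embed_pmf (realization_prob E w j)"

definition root_pmf :: "'v set \<Rightarrow> ('v \<Rightarrow> 'a) \<Rightarrow> (nat \<Rightarrow> 'a \<Rightarrow> real) \<Rightarrow> nat \<Rightarrow> 'v pmf" where
  "root_pmf V L q j = embed_pmf (\<lambda>u. if u \<in> V then q j (L u) / Qsum V L q j else 0)"

definition rr_pmf ::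
  "'v set \<Rightarrow> ('v \<times> 'v) set \<Rightarrow> (nat \<Rightarrow> 'v \<Rightarrow> 'v \<Rightarrow> real) \<Rightarrow> ('v \<Rightarrow> 'a)
   \<Rightarrow> (nat \<Rightarrow> 'a \<Rightarrow> real) \<Rightarrow> nat \<Rightarrow> 'v set pmf" where
  "rr_pmf V E w L q j =
     bind_pmf (root_pmf V L q j) (\<lambda>u.
     bind_pmf (realization_pmf E w j) (\<lambda>g.
     return_pmf {x. (x, u) \<in> g\<^sup>*}))"

definition mtrr_pmf ::
  "'v set \<Rightarrow> ('v \<times> 'v) set \<Rightarrow> nat \<Rightarrow> (nat \<Rightarrow> 'v \<Rightarrow> 'v \<Rightarrow> real) \<Rightarrow> ('v \<Rightarrow> 'a)
   \<Rightarrow> (nat \<Rightarrow> 'a \<Rightarrow> real) \<Rightarrow> (nat \<times> 'v set) pmf" where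
  "mtrr_pmf V E nT w L q =
     bind_pmf (pmf_of_set {1..nT}) (\<lambda>X.
     map_pmf (\<lambda>R. (X, R)) (rr_pmf V E w L q X))"

definition ind_j :: "nat \<Rightarrow> 'v set \<Rightarrow> nat \<times> 'v set \<Rightarrow> real" where
  "ind_j j Sj XR = (if fst XR = j \<and> Sj \<inter> snd XR \<noteq> {} then 1 else 0)"

end

theory Submission
  imports Defs
begin

lemma rp_nonneg:
  assumes "\<forall>(u,v)\<in>E. 0 \<le> w j u v \<and> w j u v \<le> 1"
  shows "0 \<le> realization_prob E w j g"
  unfolding realization_prob_def using assms
  by (auto intro!: mult_nonneg_nonneg prod_nonneg split: prod.splits)

lemma rp_sum:
  assumes "finite E" "\<forall>(u,v)\<in>E. 0 \<le> w j u v \<and> w j u v \<le> 1"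
  shows "(\<Sum>g\<in>Pow E. realization_prob E w j g) = 1"
proof -
  have "(\<Sum>g\<in>Pow E. realization_prob E w j g) =
     (\<Sum>g\<in>Pow E. (\<Prod>x\<in>g. (\<lambda>(u,v). w j u v) x) * (\<Prod>x\<in>E-g. (\<lambda>(u,v). 1 - w j u v) x))"
    unfolding realization_prob_def by (intro sum.cong) auto
  also have "\<dots> = (\<Prod>x\<in>E. (\<lambda>(u,v). w j u v) x + (\<lambda>(u,v). 1 - w j u v) x)"
    using prod_add[OF assms(1)] by metis
  also have "\<dots> = 1" by (intro prod.neutral) auto
  finally show ?thesis .
qed

lemma pmf_real:
  assumes "finite E" "\<forall>(u,v)\<in>E. 0 \<le> w j u v \<and> w j u v \<le> 1"
  shows "pmf (realization_pmf E w j) g = realization_prob E w j g"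
  unfolding realization_pmf_def
proof (rule pmf_embed_pmf)
  show "\<And>x. 0 \<le> realization_prob E w j x" using rp_nonneg[of E w j, OF assms(2)] .
  have "(\<integral>\<^sup>+ x. ennreal (realization_prob E w j x) \<partial>count_space UNIV)
      = (\<Sum>x\<in>Pow E. ennreal (realization_prob E w j x))"
    using assms by (intro nn_integral_count_space') (auto simp: realization_prob_def)
  also have "\<dots> = 1" using rp_sum[of E w j, OF assms] rp_nonneg[of E w j, OF assms(2)] by simp
  finally show "(\<integral>\<^sup>+ x. ennreal (realization_prob E w j x) \<partial>count_space UNIV) = 1" .
qed

lemma set_real:
  assumes "finite E" "\<forall>(u,v)\<in>E. 0 \<le> w j u v \<and> w j u v \<le> 1"
  shows "set_pmf (realization_pmf E w j) \<subseteq> Pow E"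
  using pmf_real[of E w j, OF assms] by (auto simp: set_pmf_eq realization_prob_def split: if_splits)

lemma pmf_root:
  assumes "finite V" "\<forall>k. 0 \<le> q j k" "Qsum V L q j > 0"
  shows "pmf (root_pmf V L q j) u = (if u \<in> V then q j (L u) / Qsum V L q j else 0)"
  unfolding root_pmf_def
proof (rule pmf_embed_pmf)
  show "\<And>x. 0 \<le> (if x \<in> V then q j (L x) / Qsum V L q j else 0)" using assms by auto
  have "(\<integral>\<^sup>+ x. ennreal (if x \<in> V then q j (L x) / Qsum V L q j else 0) \<partial>count_space UNIV)
      = (\<Sum>x\<in>V. ennreal (if x \<in> V then q j (L x) / Qsum V L q j else 0))"
    using assms by (intro nn_integral_count_space') auto
  also have "\<dots> = ennreal (\<Sum>x\<in>V. q j (L x) / Qsum V L q j)" using assms by (simp)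
  also have "(\<Sum>x\<in>V. q j (L x) / Qsum V L q j) = 1"
    using assms by (simp add: Qsum_def sum_divide_distrib[symmetric])
  finally show "(\<integral>\<^sup>+ x. ennreal (if x \<in> V then q j (L x) / Qsum V L q j else 0) \<partial>count_space UNIV) = 1" by simp
qed

lemma set_root:
  assumes "finite V" "\<forall>k. 0 \<le> q j k" "Qsum V L q j > 0"
  shows "set_pmf (root_pmf V L q j) \<subseteq> V"
  using pmf_root[OF assms] by (auto simp: set_pmf_eq split: if_splits)


lemma reach_sub:
  assumes "g \<subseteq> V \<times> V" "A \<subseteq> V"
  shows "reach_from g A \<subseteq> V"
proof
  fix v assume "v \<in> reach_from g A"
  then obtain a where a: "a \<in> A" "(a, v) \<in> g\<^sup>*" by (auto simp: reach_from_def)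
  from a(2) show "v \<in> V"
  proof (cases rule: rtranclE)
    case base then show ?thesis using a assms by auto
  next
    case (step y) then show ?thesis using assms by auto
  qed
qed

lemma sum_reach:
  assumes "finite V" "g \<subseteq> V \<times> V" "A \<subseteq> V"
  shows "(\<Sum>u\<in>V. h u * (if A \<inter> {x. (x,u) \<in> g\<^sup>*} \<noteq> {} then 1 else 0))
       = (\<Sum>v\<in>reach_from g A. (h v :: real))"
proof -
  have "(\<Sum>u\<in>V. h u * (if A \<inter> {x. (x,u) \<in> g\<^sup>*} \<noteq> {} then 1 else 0))
      = (\<Sum>u\<in>V. if u \<in> reach_from g A then h u else 0)"
    by (intro sum.cong) (auto simp: reach_from_def)
  also have "\<dots> = (\<Sum>u\<in>V \<inter> reach_from g A. h u)"
    using assms(1) by (simp add: sum.inter_restrict)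
  also have "V \<inter> reach_from g A = reach_from g A" using reach_sub[OF assms(2,3)] by blast
  finally show ?thesis .
qed

lemma exp_rr:
  assumes "finite V" "E \<subseteq> V \<times> V" "\<forall>(u,v)\<in>E. 0 \<le> w j u v \<and> w j u v \<le> 1"
    "\<forall>k. 0 \<le> q j k" "Qsum V L q j > 0"
  shows "measure_pmf.expectation (rr_pmf V E w L q j) (h :: 'v set \<Rightarrow> real) =
    (\<Sum>u\<in>V. (q j (L u) / Qsum V L q j) *
       (\<Sum>g\<in>Pow E. realization_prob E w j g * h {x. (x,u) \<in> g\<^sup>*}))"
proof -
  have fE: "finite E" using assms(1,2) finite_subset by (metis finite_SigmaI)
  have fin: "finite (set_pmf (realization_pmf E w j))"
    using set_real[of E w j, OF fE assms(3)] fE by (meson finite_Pow_iff finite_subset)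
  show ?thesis
    unfolding rr_pmf_def
    apply (subst pmf_expectation_bind[of V])
    using assms fin set_root[of V q j L, OF assms(1,4,5)] apply (auto simp: set_bind_pmf)[3]
    apply (intro sum.cong refl)
    apply (subst pmf_expectation_bind[of "Pow E"])
    using fE set_real[of E w j, OF fE assms(3)] pmf_root[of V q j L, OF assms(1,4,5)] pmf_real[of E w j, OF fE assms(3)]
    by auto
qed

theorem theorem3:
  fixes V :: "'v set" and E :: "('v \<times> 'v) set" and nT :: nat
    and w :: "nat \<Rightarrow> 'v \<Rightarrow> 'v \<Rightarrow> real" and L :: "'v \<Rightarrow> 'a"
    and q :: "nat \<Rightarrow> 'a \<Rightarrow> real" and VR :: "'v set" and Ts :: "'v \<Rightarrow> nat set"
    and S :: "'v set"
  assumes "finite V" and "E \<subseteq> V \<times> V"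
    and "\<forall>j\<in>{1..nT}. \<forall>(u,v)\<in>E. 0 \<le> w j u v \<and> w j u v \<le> 1"
    and "\<forall>j k. 0 \<le> q j k"
    and "\<forall>j\<in>{1..nT}. Qsum V L q j > 0"
    and "VR \<subseteq> V" and "\<forall>v\<in>VR. Ts v \<subseteq> {1..nT}"
    and "S \<subseteq> VR"
  shows "f_obj V E nT w L q Ts S =
    (\<Sum>j\<in>{1..nT}. Qsum V L q j *
       measure_pmf.expectation (mtrr_pmf V E nT w L q) (ind_j j (task_seeds S Ts j)))"
proof (cases "nT = 0")
  case True then show ?thesis by (simp add: f_obj_def)
next
  case False
  note a = assms
  have fE: "finite E" using a(1,2) finite_subset by (metis finite_SigmaI)
  have finrr: "finite (set_pmf (rr_pmf V E w L q X))" if "X \<in> {1..nT}" for X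
  proof -
    have "finite (set_pmf (realization_pmf E w X))"
    proof -
      have "set_pmf (realization_pmf E w X) \<subseteq> Pow E" using set_real[of E w X] fE a(3) that by auto
      then show ?thesis using fE by (meson finite_Pow_iff finite_subset)
    qed
    moreover have "finite (set_pmf (root_pmf V L q X))"
    proof -
      have "set_pmf (root_pmf V L q X) \<subseteq> V" using set_root[of V q X L] a(1,4,5) that by auto
      then show ?thesis using a(1) by (meson finite_subset)
    qed
    ultimately show ?thesis unfolding rr_pmf_def by (auto simp: set_bind_pmf)
  qed
  have mt: "measure_pmf.expectation (mtrr_pmf V E nT w L q) (ind_j j Sj) =
     measure_pmf.expectation (rr_pmf V E w L q j) (\<lambda>R. if Sj \<inter> R \<noteq> {} then 1 else 0) / real nT"
    if j: "j \<in> {1..nT}" for j and Sj :: "'v set"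
  proof -
    have "measure_pmf.expectation (mtrr_pmf V E nT w L q) (ind_j j Sj) =
      (\<Sum>X\<in>{1..nT}. measure_pmf.expectation (map_pmf (\<lambda>R. (X, R)) (rr_pmf V E w L q X)) (ind_j j Sj) /\<^sub>R real (card {1..nT}))"
      unfolding mtrr_pmf_def using False finrr
      by (intro pmf_expectation_bind_pmf_of_set) auto
    also have "\<dots> = (\<Sum>X\<in>{1..nT}. if X = j then measure_pmf.expectation (rr_pmf V E w L q j) (\<lambda>R. if Sj \<inter> R \<noteq> {} then 1 else 0) / real nT else 0)"
      by (intro sum.cong refl) (auto simp: ind_j_def divide_inverse mult.commute)
    also have "\<dots> = measure_pmf.expectation (rr_pmf V E w L q j) (\<lambda>R. if Sj \<inter> R \<noteq> {} then 1 else 0) / real nT"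
      using j by (simp add: divide_inverse mult.commute)
    finally show ?thesis .
  qed
  have trm: "Qsum V L q j * measure_pmf.expectation (mtrr_pmf V E nT w L q) (ind_j j (task_seeds S Ts j))
     = (1 / real nT) * (\<Sum>g\<in>Pow E. realization_prob E w j g *
          (\<Sum>v\<in>reach_from g (task_seeds S Ts j). q j (L v)))"
    if j: "j \<in> {1..nT}" for j
  proof -
    let ?Sj = "task_seeds S Ts j"
    have Q: "Qsum V L q j > 0" using a(5) j by auto
    have SjV: "?Sj \<subseteq> V" using a(6,8) by (auto simp: task_seeds_def)
    have wj: "\<forall>(u,v)\<in>E. 0 \<le> w j u v \<and> w j u v \<le> 1" using a(3) j by blast
    have qj: "\<forall>k. 0 \<le> q j k" using a(4) by blast
    have ee: "measure_pmf.expectation (rr_pmf V E w L q j) (\<lambda>R. if ?Sj \<inter> R \<noteq> {} then 1 else 0) =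
      (\<Sum>u\<in>V. (q j (L u) / Qsum V L q j) *
       (\<Sum>g\<in>Pow E. realization_prob E w j g * (if ?Sj \<inter> {x. (x,u) \<in> g\<^sup>*} \<noteq> {} then 1 else 0)))"
      by (rule exp_rr[where w=w and j=j and q=q and L=L, OF a(1,2) wj qj Q])
    have "Qsum V L q j * measure_pmf.expectation (mtrr_pmf V E nT w L q) (ind_j j ?Sj)
      = Qsum V L q j * (\<Sum>u\<in>V. (q j (L u) / Qsum V L q j) *
       (\<Sum>g\<in>Pow E. realization_prob E w j g * (if ?Sj \<inter> {x. (x,u) \<in> g\<^sup>*} \<noteq> {} then 1 else 0))) / real nT"
      using mt[OF j] ee by simp
    also have "Qsum V L q j * (\<Sum>u\<in>V. (q j (L u) / Qsum V L q j) *
       (\<Sum>g\<in>Pow E. realization_prob E w j g * (if ?Sj \<inter> {x. (x,u) \<in> g\<^sup>*} \<noteq> {} then 1 else 0)))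
      = (\<Sum>u\<in>V. \<Sum>g\<in>Pow E. realization_prob E w j g * (q j (L u) * (if ?Sj \<inter> {x. (x,u) \<in> g\<^sup>*} \<noteq> {} then 1 else 0)))"
      using Q by (simp add: sum_distrib_left sum_distrib_right mult_ac)
    also have "\<dots> = (\<Sum>g\<in>Pow E. realization_prob E w j g * (\<Sum>u\<in>V. q j (L u) * (if ?Sj \<inter> {x. (x,u) \<in> g\<^sup>*} \<noteq> {} then 1 else 0)))"
      by (subst sum.swap) (simp add: sum_distrib_left)
    also have "\<dots> = (\<Sum>g\<in>Pow E. realization_prob E w j g * (\<Sum>v\<in>reach_from g ?Sj. q j (L v)))"
      using a(1,2) SjV by (intro sum.cong refl arg_cong2[where f="(*)"] sum_reach) auto
    finally show ?thesis by simp
  qed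
  show ?thesis unfolding f_obj_def
    by (simp add: trm sum_distrib_left)
qed

end
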